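(* In the setting of the context (with $g$ unimodal, symmetric about $0$ and logconcave), letting $d_2=G^{-1}\big(1-\frac{\alpha^2}{1+\alpha}\big)-d_0$, one has $$\sup_{\theta\ge0}C(\theta)\ \ge\ C(d_2)\ \ge\ G(x_1(d_2))-\frac{\alpha^2}{1+\alpha}.$$
   Context: Let $g$ be a probability density on $\mathbb{R}$, unimodal and symmetric about $0$ (i.e. $g(z)=g(-z)$ and $g$ nonincreasing on $[0,\infty)$), and logconcave ($\log g$ concave on its support), with cdf $G$ and quantile function $G^{-1}(t)=\inf\{x:G(x)\ge t\}$. Let $X$ have density $g(x-\theta)$, $\theta\ge0$, and $P_\theta$ the corresponding probability. Fix $\alpha\in(0,1)$, and set $d_0=G^{-1}(\tfrac1{1+\alpha})$. The HPD credible interval (prior $1_{[0,\infty)}(\theta)$, credibility $1-\alpha$) is $[l(X),u(X)]$ with $l(x)=\{x-G^{-1}(\tfrac12+\tfrac{1-\alpha}2G(x))\}1_{(d_0,\infty)}(x)$, $u(x)=x-G^{-1}(\alpha G(x))$ for $x\le d_0$ and $u(x)=x+G^{-1}(\tfrac12+\tfrac{1-\alpha}2G(x))$ for $x>d_0$. The frequentist coverage is $C(\theta)=P_\theta(l(X)\le\theta\le u(X))$. Let $l^{-1}(\theta)=\sup\{x:\theta\ge l(x)\}$ and $x_1(\theta)=l^{-1}(\theta)-\theta$ for $\theta\ge0$. *)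

theory Defs
  imports "HOL-Analysis.Analysis"
begin

definition cdfG :: "(real \<Rightarrow> real) \<Rightarrow> real \<Rightarrow> real" where
  "cdfG g x = measure (density lborel (\<lambda>t. ennreal (g t))) {..x}"

definition quantG :: "(real \<Rightarrow> real) \<Rightarrow> real \<Rightarrow> real" where
  "quantG g t = Inf {x. cdfG g x \<ge> t}"

definition d0 :: "(real \<Rightarrow> real) \<Rightarrow> real \<Rightarrow> real" where
  "d0 g \<alpha> = quantG g (1 / (1 + \<alpha>))"

definition lHPD :: "(real \<Rightarrow> real) \<Rightarrow> real \<Rightarrow> real \<Rightarrow> real" where
  "lHPD g \<alpha> x = (if x > d0 g \<alpha>
      then x - quantG g (1/2 + (1 - \<alpha>) / 2 * cdfG g x) else 0)"

definition uHPD :: "(real \<Rightarrow> real) \<Rightarrow> real \<Rightarrow> real \<Rightarrow> real" where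
  "uHPD g \<alpha> x = (if x \<le> d0 g \<alpha>
      then x - quantG g (\<alpha> * cdfG g x)
      else x + quantG g (1/2 + (1 - \<alpha>) / 2 * cdfG g x))"

definition coverage :: "(real \<Rightarrow> real) \<Rightarrow> real \<Rightarrow> real \<Rightarrow> real" where
  "coverage g \<alpha> \<theta> = measure (density lborel (\<lambda>x. ennreal (g (x - \<theta>))))
      {x. lHPD g \<alpha> x \<le> \<theta> \<and> \<theta> \<le> uHPD g \<alpha> x}"

definition linv :: "(real \<Rightarrow> real) \<Rightarrow> real \<Rightarrow> real \<Rightarrow> real" where
  "linv g \<alpha> \<theta> = Sup {x. \<theta> \<ge> lHPD g \<alpha> x}"

definition x1 :: "(real \<Rightarrow> real) \<Rightarrow> real \<Rightarrow> real \<Rightarrow> real" where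
  "x1 g \<alpha> \<theta> = linv g \<alpha> \<theta> - \<theta>"

end

theory Submission imports Defs "HOL-Probability.Probability" begin

locale symdens =
  fixes g :: "real \<Rightarrow> real"
  assumes meas[measurable]: "g \<in> borel_measurable borel"
    and nonneg: "\<And>x. 0 \<le> g x"
    and int1: "(\<integral>\<^sup>+ x. ennreal (g x) \<partial>lborel) = 1"
    and symm: "\<And>z. g (- z) = g z"
    and unimod: "antimono_on {0..} g"
begin

definition "M = density lborel (\<lambda>t. ennreal (g t))"
definition "F x = (\<integral>\<^sup>+t. ennreal (g t) * indicator {..x} t \<partial>lborel)"

lemma sets_M[simp]: "sets M = sets borel" and space_M[simp]: "space M = UNIV"
  by (auto simp: M_def)

lemma emeasure_M: "A \<in> sets borel \<Longrightarrow> emeasure M A = (\<integral>\<^sup>+t. ennreal (g t) * indicator A t \<partial>lborel)"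
  unfolding M_def by (subst emeasure_density) auto

lemma prob_M: "prob_space M"
  apply (rule prob_spaceI) using int1 by (simp add: emeasure_M)

lemma rd_M: "real_distribution M"
  unfolding real_distribution_def real_distribution_axioms_def using prob_M by simp

interpretation RD: real_distribution M by (rule rd_M)

lemma G_cdf: "cdfG g = cdf M"
  by (rule ext) (simp add: cdfG_def cdf_def M_def)

lemma F_emeasure: "F x = emeasure M {..x}"
  by (simp add: emeasure_M F_def)

lemma F_le1: "F x \<le> 1"
  using prob_space.emeasure_le_1[OF prob_M] F_emeasure by simp

lemma G_F: "cdfG g x = enn2real (F x)"
  by (simp add: cdfG_def F_def measure_def emeasure_M[symmetric] M_def[symmetric] F_emeasure)

lemma F_G: "F x = ennreal (cdfG g x)"
  using F_le1[of x] by (simp add: G_F ennreal_enn2real_if) (metis ennreal_one_less_top order.strict_trans1 less_top)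

lemma atom0: "measure M {x} = 0"
proof -
  have "emeasure M {x} = (\<integral>\<^sup>+t. ennreal (g t) * indicator {x} t \<partial>lborel)" by (simp add: emeasure_M)
  also have "\<dots> = (\<integral>\<^sup>+t. 0 \<partial>(lborel::real measure))"
  proof (rule nn_integral_cong_AE)
    show "AE t in lborel. ennreal (g t) * indicator {x} t = 0"
      using AE_lborel_singleton[of x] by eventually_elim auto
  qed
  finally show ?thesis by (simp add: measure_def)
qed

lemma G_cont: "isCont (cdfG g) x"
  unfolding G_cdf using RD.isCont_cdf atom0 by simp

lemma G_mono: "x \<le> y \<Longrightarrow> cdfG g x \<le> cdfG g y"
  unfolding G_cdf using RD.cdf_nondecreasing by simp

lemma G_nonneg: "0 \<le> cdfG g x"
  unfolding G_cdf using RD.cdf_nonneg by simp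

lemma G_le1: "cdfG g x \<le> 1"
  unfolding G_cdf using RD.cdf_bounded_prob by simp

lemma G_top: "(cdfG g \<longlongrightarrow> 1) at_top"
  unfolding G_cdf using RD.cdf_lim_at_top_prob by simp

lemma G_bot: "(cdfG g \<longlongrightarrow> 0) at_bot"
  unfolding G_cdf using RD.cdf_lim_at_bot by simp


lemma G_sym: "cdfG g (- x) = 1 - cdfG g x"
proof -
  have "F (- x) = (\<integral>\<^sup>+t. ennreal (g t) * indicator {..-x} t \<partial>lborel)" by (simp add: F_def)
  also have "\<dots> = (\<integral>\<^sup>+t. ennreal (g t) * indicator {x..} t \<partial>lborel)"
    by (subst nn_integral_real_affine[where c="-1" and t=0]) (auto simp: symm indicator_def intro!: nn_integral_cong)
  also have "\<dots> = emeasure M {x..}" by (simp add: emeasure_M)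
  finally have "measure M {..-x} = measure M {x..}"
    by (simp add: F_emeasure measure_def)
  also have "{x..} = space M - {..<x}" by auto
  also have "measure M (space M - {..<x}) = 1 - measure M {..<x}"
    by (rule RD.prob_compl) auto
  also have "measure M {..<x} = measure M {..x}"
  proof -
    have "measure M {..x} = measure M ({..<x} \<union> {x})" by (metis ivl_disj_un_singleton(2))
    also have "\<dots> = measure M {..<x} + measure M {x}"
      by (rule RD.finite_measure_Union) auto
    finally show ?thesis using atom0 by simp
  qed
  finally show ?thesis by (simp add: cdfG_def M_def)
qed

lemma G_0: "cdfG g 0 = 1/2"
  using G_sym[of 0] by simp

context
  fixes t :: real assumes t: "0 < t" "t < 1"
begin

lemma ex_hi: "\<exists>x. t < cdfG g x"
proof -
  have "eventually (\<lambda>x. t < cdfG g x) at_top" using order_tendstoD(1)[OF G_top] t by simp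
  then show ?thesis by (auto simp: eventually_at_top_linorder)
qed

lemma ex_lo: "\<exists>x. cdfG g x < t"
proof -
  have "eventually (\<lambda>x. cdfG g x < t) at_bot" using order_tendstoD(2)[OF G_bot] t by simp
  then show ?thesis by (auto simp: eventually_at_bot_linorder)
qed

lemma Sset: "{x. t \<le> cdfG g x} \<noteq> {}" "bdd_below {x. t \<le> cdfG g x}" "closed {x. t \<le> cdfG g x}"
proof -
  show "{x. t \<le> cdfG g x} \<noteq> {}" using ex_hi by (metis (mono_tags) empty_iff less_imp_le mem_Collect_eq)
  obtain x0 where x0: "cdfG g x0 < t" using ex_lo by blast
  have "x0 \<le> y" if "t \<le> cdfG g y" for y
  proof (rule ccontr)
    assume "\<not> x0 \<le> y" then have "cdfG g y \<le> cdfG g x0" by (intro G_mono) auto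
    with x0 that show False by simp
  qed
  then show "bdd_below {x. t \<le> cdfG g x}" by (auto simp: bdd_below_def)
  have "continuous_on UNIV (cdfG g)" using G_cont by (simp add: continuous_on_eq_continuous_at)
  then show "closed {x. t \<le> cdfG g x}"
    by (intro closed_Collect_le) (auto intro: continuous_intros)
qed

lemma Q_in: "t \<le> cdfG g (quantG g t)"
  using closed_contains_Inf[OF Sset(1) Sset(2) Sset(3)] by (simp add: quantG_def)

lemma Q_le_iff: "quantG g t \<le> y \<longleftrightarrow> t \<le> cdfG g y"
proof
  assume "quantG g t \<le> y" then show "t \<le> cdfG g y" using Q_in G_mono order_trans by blast
next
  assume "t \<le> cdfG g y" then show "quantG g t \<le> y"
    unfolding quantG_def by (intro cInf_lower Sset(2)) auto
qed

lemma G_Q: "cdfG g (quantG g t) = t"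
proof -
  obtain x0 where x0: "cdfG g x0 < t" using ex_lo by blast
  have "x0 \<le> quantG g t"
  proof (rule ccontr)
    assume "\<not> x0 \<le> quantG g t" then have "cdfG g (quantG g t) \<le> cdfG g x0" by (intro G_mono) auto
    with x0 Q_in show False by simp
  qed
  then obtain z where z: "x0 \<le> z" "z \<le> quantG g t" "cdfG g z = t"
    using IVT[of "cdfG g" x0 t "quantG g t"] x0 Q_in G_cont by auto
  then have "quantG g t \<le> z" using Q_le_iff by simp
  with z show ?thesis by simp
qed

end

lemma Q_mono: "0 < t1 \<Longrightarrow> t1 \<le> t2 \<Longrightarrow> t2 < 1 \<Longrightarrow> quantG g t1 \<le> quantG g t2"
  using Q_le_iff[of t1 "quantG g t2"] G_Q[of t2] by simp


definition "D a h = (\<integral>\<^sup>+t. ennreal (g (a + t)) * indicator {0<..h} t \<partial>lborel)"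

lemma F_split: "0 \<le> h \<Longrightarrow> F (a + h) = F a + D a h"
proof -
  assume h: "0 \<le> h"
  have "F (a + h) = (\<integral>\<^sup>+t. ennreal (g t) * indicator {..a} t + ennreal (g t) * indicator {a<..a+h} t \<partial>lborel)"
    unfolding F_def using h by (intro nn_integral_cong) (auto simp: indicator_def)
  also have "\<dots> = F a + (\<integral>\<^sup>+t. ennreal (g t) * indicator {a<..a+h} t \<partial>lborel)"
    unfolding F_def by (rule nn_integral_add) auto
  also have "(\<integral>\<^sup>+t. ennreal (g t) * indicator {a<..a+h} t \<partial>lborel) = D a h"
    unfolding D_def
    by (subst nn_integral_real_affine[where c="1" and t=a]) (auto simp: indicator_def intro!: nn_integral_cong)
  finally show ?thesis .
qed

lemma F_refl: "F a = (\<integral>\<^sup>+s. ennreal (g (a - s)) * indicator {0..} s \<partial>lborel)"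
  unfolding F_def
  by (subst nn_integral_real_affine[where c="-1" and t=a]) (auto simp: indicator_def intro!: nn_integral_cong)

lemma D_eq: "0 \<le> h \<Longrightarrow> D a h = ennreal (cdfG g (a + h) - cdfG g a)"
proof -
  assume h: "0 \<le> h"
  have "ennreal (cdfG g (a + h)) = ennreal (cdfG g a) + D a h" using F_split[OF h] by (simp add: F_G)
  then have "D a h = ennreal (cdfG g (a + h)) - ennreal (cdfG g a)" by simp
  then show ?thesis using G_nonneg by (simp add: ennreal_minus)
qed

lemma M1: assumes "0 \<le> a" "a \<le> a'" "0 \<le> h"
  shows "cdfG g (a' + h) - cdfG g a' \<le> cdfG g (a + h) - cdfG g a"
proof -
  have "D a' h \<le> D a h"
    unfolding D_def
  proof (intro nn_integral_mono)
    fix t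
    show "ennreal (g (a' + t)) * indicator {0<..h} t \<le> ennreal (g (a + t)) * indicator {0<..h} t"
    proof (cases "t \<in> {0<..h}")
      case True
      then have "g (a' + t) \<le> g (a + t)" using unimod assms
        unfolding monotone_on_def by auto
      then show ?thesis using True by (simp add: indicator_def ennreal_leI)
    qed (auto simp: indicator_def)
  qed
  then show ?thesis using D_eq[OF assms(3)] G_mono[of a "a+h"] assms
    by (simp add: ennreal_le_iff)
qed

lemma pos_between: assumes "0 < g u" "0 < g v" "u \<le> w" "w \<le> v" shows "0 < g w"
proof -
  have abs: "g (\<bar>y\<bar>) = g y" for y by (cases "y \<ge> 0") (auto simp: symm)
  define m where "m = max \<bar>u\<bar> \<bar>v\<bar>"
  have "\<bar>w\<bar> \<le> m" using assms by (auto simp: m_def)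
  then have "g m \<le> g \<bar>w\<bar>" using unimod unfolding monotone_on_def m_def by auto
  moreover have "0 < g m" using assms abs[of u] abs[of v] by (auto simp: m_def max_def)
  ultimately show ?thesis using abs[of w] by simp
qed

lemma Z: assumes "z < w" "w \<le> 0" "cdfG g z = cdfG g w" shows "cdfG g z = 0"
proof (rule ccontr)
  assume nz: "cdfG g z \<noteq> 0"
  have "D z (w - z) = 0" using D_eq[of "w - z" z] assms by simp
  have "\<exists>y\<le>z. 0 < g y"
  proof (rule ccontr)
    assume "\<not> (\<exists>y\<le>z. 0 < g y)"
    then have "\<And>y. y \<le> z \<Longrightarrow> g y = 0" using nonneg by (metis antisym not_le)
    then have "F z = (\<integral>\<^sup>+t. 0 \<partial>(lborel::real measure))" unfolding F_def
      by (intro nn_integral_cong) (auto simp: indicator_def)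
    then show False using nz G_nonneg[of z] by (simp add: F_G)
  qed
  then obtain y where y: "y \<le> z" "0 < g y" by blast
  have "(\<integral>\<^sup>+t. ennreal (g y) * indicator {0<..w-z} t \<partial>lborel) \<le> D z (w - z)"
    unfolding D_def
  proof (intro nn_integral_mono)
    fix t
    show "ennreal (g y) * indicator {0<..w-z} t \<le> ennreal (g (z + t)) * indicator {0<..w-z} t"
    proof (cases "t \<in> {0<..w-z}")
      case True
      then have "g (- y) \<le> g (- (z + t))" using unimod assms y
        unfolding monotone_on_def by auto
      then have "g y \<le> g (z + t)" by (metis symm)
      then show ?thesis using True by (simp add: indicator_def ennreal_leI)
    qed (auto simp: indicator_def)
  qed
  also have "\<dots> = 0" by fact
  finally have "ennreal (g y) * ennreal (w - z) = 0"
    using assms by (simp add: nn_integral_cmult_indicator)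
  then show False using y assms nonneg[of y] by (metis diff_gt_0_iff_gt ennreal_eq_0_iff mult_eq_0_iff not_le)
qed


lemma prod_nn: assumes [measurable]: "f \<in> borel_measurable borel" "k \<in> borel_measurable borel"
  shows "(\<integral>\<^sup>+s. f s \<partial>lborel) * (\<integral>\<^sup>+t. k t \<partial>lborel) = (\<integral>\<^sup>+s. (\<integral>\<^sup>+t. f s * k t \<partial>lborel) \<partial>lborel)"
proof -
  have "(\<integral>\<^sup>+s. f s \<partial>lborel) * (\<integral>\<^sup>+t. k t \<partial>lborel) = (\<integral>\<^sup>+s. f s * (\<integral>\<^sup>+t. k t \<partial>lborel) \<partial>lborel)"
    by (rule nn_integral_multc[symmetric]) auto
  also have "\<dots> = (\<integral>\<^sup>+s. (\<integral>\<^sup>+t. f s * k t \<partial>lborel) \<partial>lborel)"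
    by (intro nn_integral_cong nn_integral_cmult[symmetric]) auto
  finally show ?thesis .
qed

context
  assumes lc: "concave_on {x. 0 < g x} (\<lambda>x. ln (g x))"
begin

lemma PW: assumes "q \<le> a" "0 \<le> s" "0 \<le> t"
  shows "g (q - s) * g (a + t) \<le> g (a - s) * g (q + t)"
proof (cases "0 < g (q - s) \<and> 0 < g (a + t)")
  case False
  then have "g (q - s) * g (a + t) = 0" using nonneg by (metis less_eq_real_def mult_eq_0_iff)
  moreover have "0 \<le> g (a - s) * g (q + t)" using nonneg by simp
  ultimately show ?thesis by linarith
next
  case True
  define x1 where "x1 = q - s"
  define x2 where "x2 = a + t"
  have gx: "0 < g x1" "0 < g x2" using True by (auto simp: x1_def x2_def)
  have gy: "0 < g (a - s)" "0 < g (q + t)"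
    using pos_between[OF gx] assms by (auto simp: x1_def x2_def)
  show ?thesis
  proof (cases "x1 = x2")
    case True
    then have "q = a" "s = 0" "t = 0" using assms by (auto simp: x1_def x2_def)
    then show ?thesis by simp
  next
    case False
    then have lt: "x1 < x2" using assms by (auto simp: x1_def x2_def)
    define t1 where "t1 = (a - q) / (x2 - x1)"
    define t2 where "t2 = (s + t) / (x2 - x1)"
    have "t1 + t2 = (a - q + (s + t)) / (x2 - x1)" by (simp add: t1_def t2_def add_divide_distrib)
    also have "a - q + (s + t) = x2 - x1" by (simp add: x1_def x2_def)
    finally have t12: "t1 + t2 = 1" using lt by simp
    have t1r: "0 \<le> t1" "t1 \<le> 1" "0 \<le> t2" "t2 \<le> 1" using lt assms t12
      by (auto simp: t1_def t2_def x1_def x2_def)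
    have e1: "t1 * (x2 - x1) = a - q" using lt by (simp add: t1_def)
    have e2: "t2 * (x2 - x1) = s + t" using lt by (simp add: t2_def)
    have y1: "a - s = (1 - t1) *\<^sub>R x1 + t1 *\<^sub>R x2"
    proof -
      have "(1 - t1) *\<^sub>R x1 + t1 *\<^sub>R x2 = x1 + t1 * (x2 - x1)" by (simp add: algebra_simps)
      then show ?thesis using e1 by (simp add: x1_def)
    qed
    have y2: "q + t = (1 - t2) *\<^sub>R x1 + t2 *\<^sub>R x2"
    proof -
      have "(1 - t2) *\<^sub>R x1 + t2 *\<^sub>R x2 = x1 + t2 * (x2 - x1)" by (simp add: algebra_simps)
      then show ?thesis using e2 by (simp add: x1_def)
    qed
    have c1: "ln (g (a - s)) \<ge> (1 - t1) * ln (g x1) + t1 * ln (g x2)"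
      unfolding y1 by (rule concave_onD[OF lc]) (use t1r gx in auto)
    have c2: "ln (g (q + t)) \<ge> (1 - t2) * ln (g x1) + t2 * ln (g x2)"
      unfolding y2 by (rule concave_onD[OF lc]) (use t1r gx in auto)
    have t2e: "t2 = 1 - t1" using t12 by simp
    have sm: "(1 - t1) * A + t1 * B + ((1 - t2) * A + t2 * B) = A + B" for A B
      unfolding t2e by (simp add: algebra_simps)
    have "ln (g x1) + ln (g x2) \<le> ln (g (a - s)) + ln (g (q + t))"
      using c1 c2 sm[of "ln (g x1)" "ln (g x2)"] by linarith
    then have "ln (g x1 * g x2) \<le> ln (g (a - s) * g (q + t))"
      using gx gy by (simp add: ln_mult)
    then have "g x1 * g x2 \<le> g (a - s) * g (q + t)" using gx gy by simp
    then show ?thesis by (simp add: x1_def x2_def)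
  qed
qed

lemma L_enn: assumes "q \<le> a" "0 \<le> h"
  shows "F q * F (a + h) \<le> F a * F (q + h)"
proof -
  have "F q * D a h \<le> F a * D q h"
    unfolding F_refl D_def
    apply (subst prod_nn, measurable)+
  proof (intro nn_integral_mono)
    fix s t
    show "ennreal (g (q - s)) * indicator {0..} s * (ennreal (g (a + t)) * indicator {0<..h} t)
        \<le> ennreal (g (a - s)) * indicator {0..} s * (ennreal (g (q + t)) * indicator {0<..h} t)"
    proof (cases "s \<in> {0..} \<and> t \<in> {0<..h}")
      case True
      then have "g (q - s) * g (a + t) \<le> g (a - s) * g (q + t)" using PW[OF assms(1)] by auto
      then show ?thesis using True nonneg by (simp add: indicator_def ennreal_mult'[symmetric] ennreal_leI mult.assoc)
    qed (auto simp: indicator_def)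
  qed
  then have "F q * F a + F q * D a h \<le> F a * F q + F a * D q h"
    by (simp add: mult.commute add_left_mono)
  then show ?thesis using F_split[OF assms(2)] by (simp add: distrib_left)
qed

lemma L: assumes "q \<le> a" "0 \<le> h"
  shows "cdfG g q * cdfG g (a + h) \<le> cdfG g a * cdfG g (q + h)"
  using L_enn[OF assms] G_nonneg by (simp add: F_G ennreal_mult'[symmetric] ennreal_le_iff)

end


lemma G_meas[measurable]: "cdfG g \<in> borel_measurable borel"
  by (rule borel_measurable_mono) (auto simp: mono_def G_mono)

lemma Q_meas[measurable]: "quantG g \<in> borel_measurable borel"
proof (rule borel_measurable_piecewise_mono[of "{{..0}, {0<..<1}, {1}, {1<..}}"])
  fix c :: "real set" assume "c \<in> {{..0}, {0<..<1}, {1}, {1<..}}"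
  moreover have "mono_on {..0} (quantG g)"
  proof -
    have "quantG g t = Inf UNIV" if "t \<le> 0" for t
      unfolding quantG_def using that G_nonneg by (metis (mono_tags, lifting) UNIV_eq_I mem_Collect_eq order_trans)
    then show ?thesis by (auto simp: mono_on_def)
  qed
  moreover have "mono_on {1<..} (quantG g)"
  proof -
    have "quantG g t = Inf {}" if "1 < t" for t
      unfolding quantG_def using that G_le1 by (metis (mono_tags, lifting) empty_Collect_eq not_le order_trans)
    then show ?thesis by (auto simp: mono_on_def)
  qed
  moreover have "mono_on {0<..<1} (quantG g)"
    by (auto simp: mono_on_def intro: Q_mono)
  moreover have "mono_on {1} (quantG g)" by (auto simp: mono_on_def)
  ultimately show "mono_on c (quantG g)" by auto
qed auto

lemma shift: assumes "A \<in> sets borel"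
  shows "measure (density lborel (\<lambda>x. ennreal (g (x - \<theta>)))) A = measure M {t. t + \<theta> \<in> A}"
proof -
  have m: "{t. t + \<theta> \<in> A} \<in> sets borel"
  proof -
    have "(\<lambda>t. t + \<theta>) -` A \<inter> space borel \<in> sets borel"
      by (rule measurable_sets[OF _ assms]) measurable
    then show ?thesis by (simp add: vimage_def)
  qed
  have "emeasure (density lborel (\<lambda>x. ennreal (g (x - \<theta>)))) A
      = (\<integral>\<^sup>+x. ennreal (g (x - \<theta>)) * indicator A x \<partial>lborel)"
    using assms by (subst emeasure_density) auto
  also have "\<dots> = (\<integral>\<^sup>+t. ennreal (g t) * indicator {t. t + \<theta> \<in> A} t \<partial>lborel)"
    using assms by (subst nn_integral_real_affine[where c="1" and t=\<theta>]) (auto simp: indicator_def add.commute intro!: nn_integral_cong)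
  also have "\<dots> = emeasure M {t. t + \<theta> \<in> A}" using m by (simp add: emeasure_M)
  finally show ?thesis by (simp add: measure_def)
qed

end

lemma l_meas: assumes "symdens g" shows "lHPD g \<alpha> \<in> borel_measurable borel"
proof -
  interpret symdens g by fact
  show ?thesis unfolding lHPD_def[abs_def] by measurable
qed

lemma u_meas: assumes "symdens g" shows "uHPD g \<alpha> \<in> borel_measurable borel"
proof -
  interpret symdens g by fact
  show ?thesis unfolding uHPD_def[abs_def] by measurable
qed


theorem mainTheorem6:
  fixes g :: "real \<Rightarrow> real" and \<alpha> :: real
  assumes g_meas: "g \<in> borel_measurable borel"
    and g_nonneg: "\<And>x. 0 \<le> g x"
    and g_int: "(\<integral>\<^sup>+ x. ennreal (g x) \<partial>lborel) = 1"
    and g_symm: "\<And>z. g (- z) = g z"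
    and g_unimodal: "antimono_on {0..} g"
    and g_logconcave: "concave_on {x. 0 < g x} (\<lambda>x. ln (g x))"
    and alpha: "0 < \<alpha>" "\<alpha> < 1"
  defines "d2 \<equiv> quantG g (1 - \<alpha>\<^sup>2 / (1 + \<alpha>)) - d0 g \<alpha>"
  shows "(SUP \<theta>\<in>{0..}. coverage g \<alpha> \<theta>) \<ge> coverage g \<alpha> d2
       \<and> coverage g \<alpha> d2 \<ge> cdfG g (x1 g \<alpha> d2) - \<alpha>\<^sup>2 / (1 + \<alpha>)"
proof -
  have sd: "symdens g" by unfold_locales (fact+)
  interpret symdens g by (rule sd)
  interpret RD: real_distribution M by (rule rd_M)
  define G where "G = cdfG g"
  define Q where "Q = quantG g"
  define \<beta> where "\<beta> = \<alpha>\<^sup>2 / (1 + \<alpha>)"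
  define D0 where "D0 = d0 g \<alpha>"
  have D0Q: "D0 = Q (1 / (1 + \<alpha>))" by (simp add: D0_def d0_def Q_def)
  have d2D: "d2 = Q (1 - \<beta>) - D0" by (simp add: d2_def Q_def \<beta>_def D0_def)
  have r1: "0 < 1 / (1 + \<alpha>)" "1 / (1 + \<alpha>) < 1" using alpha by (auto simp: field_simps)
  have aa: "\<alpha> * \<alpha> < 1 + \<alpha>" using alpha mult_left_le_one_le[of \<alpha> \<alpha>] by linarith
  have r2: "0 < 1 - \<beta>" "1 - \<beta> < 1" "1 / (1 + \<alpha>) \<le> 1 - \<beta>" "0 < \<beta>"
    using alpha aa by (auto simp: \<beta>_def field_simps power2_eq_square)
  have GQ: "\<And>t. 0 < t \<Longrightarrow> t < 1 \<Longrightarrow> G (Q t) = t" by (simp add: G_def Q_def G_Q)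
  have Qle: "\<And>t y. 0 < t \<Longrightarrow> t < 1 \<Longrightarrow> Q t \<le> y \<longleftrightarrow> t \<le> G y" by (simp add: G_def Q_def Q_le_iff)
  have Qmono: "\<And>t1 t2. 0 < t1 \<Longrightarrow> t1 \<le> t2 \<Longrightarrow> t2 < 1 \<Longrightarrow> Q t1 \<le> Q t2" by (simp add: Q_def Q_mono)
  have Gmono: "\<And>x y. x \<le> y \<Longrightarrow> G x \<le> G y" by (simp add: G_def G_mono)
  have Gsym: "\<And>x. G (- x) = 1 - G x" by (simp add: G_def G_sym)
  have Gd0: "G D0 = 1 / (1 + \<alpha>)" using GQ r1 D0Q by simp
  have Gmd0: "G (- D0) = \<alpha> / (1 + \<alpha>)"
  proof -
    have "G (- D0) = 1 - 1 / (1 + \<alpha>)" using Gd0 Gsym[of D0] by simp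
    also have "\<dots> = \<alpha> / (1 + \<alpha>)" using alpha by (simp add: field_simps)
    finally show ?thesis .
  qed
  have d0pos: "0 < D0"
  proof (rule ccontr)
    assume "\<not> 0 < D0" then have "1 / (1 + \<alpha>) \<le> G 0" using Qle[OF r1, of 0] D0Q by simp
    then show False using alpha G_0 by (simp add: G_def field_simps)
  qed
  have d2nn: "0 \<le> d2" using Qmono[OF r1(1) r2(3) r2(2)] d2D D0Q by simp
  have Ga: "G (- D0 - d2) = \<beta>"
  proof -
    have "- D0 - d2 = - Q (1 - \<beta>)" using d2D by simp
    then show ?thesis using Gsym GQ r2 by simp
  qed
  define s where "s x = 1/2 + (1 - \<alpha>) / 2 * G x" for x
  have lH: "lHPD g \<alpha> x = (if x > D0 then x - Q (s x) else 0)" for x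
    by (simp add: lHPD_def D0_def Q_def s_def G_def)
  have uH: "uHPD g \<alpha> x = (if x \<le> D0 then x - Q (\<alpha> * G x) else x + Q (s x))" for x
    by (simp add: uHPD_def D0_def Q_def s_def G_def)
  have G01: "0 \<le> G x" "G x \<le> 1" for x by (auto simp: G_def G_nonneg G_le1)
  have s_facts: "0 < s x" "s x < 1" "1 / (1 + \<alpha>) \<le> s x" "s x \<le> G x" if "D0 < x" for x
  proof -
    have gx: "1 / (1 + \<alpha>) \<le> G x" using Gmono[of D0 x] that Gd0 by simp
    have sb: "0 \<le> (1 - \<alpha>) / 2 * G x" "(1 - \<alpha>) / 2 * G x \<le> (1 - \<alpha>) / 2"
      using G01[of x] alpha by (auto intro: mult_left_le)
    show "0 < s x" using sb by (simp add: s_def)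
    have "(1 - \<alpha>) / 2 < 1 / 2" using alpha by simp
    then show "s x < 1" using sb unfolding s_def by linarith
    have "1 / (1 + \<alpha>) = 1/2 + (1 - \<alpha>) / 2 * (1 / (1 + \<alpha>))" using alpha by (simp add: field_simps)
    also have "\<dots> \<le> s x" unfolding s_def using gx alpha by (intro add_left_mono mult_left_mono) auto
    finally show "1 / (1 + \<alpha>) \<le> s x" .
    have "(1 + \<alpha>) * G x \<ge> 1" using gx alpha by (simp add: field_simps)
    then show "s x \<le> G x" unfolding s_def by (simp add: field_simps)
  qed
  have lmono: "lHPD g \<alpha> x \<le> lHPD g \<alpha> y" if xy: "x \<le> y" for x y
  proof (cases "D0 < x")
    case False
    show ?thesis
    proof (cases "D0 < y")
      case True
      have "Q (s y) \<le> y" using Qle s_facts[OF True] by simp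
      then show ?thesis using True False by (simp add: lH)
    qed (use False in \<open>simp add: lH\<close>)
  next
    case True
    then have Ty: "D0 < y" using xy by simp
    define q where "q = Q (s x)"
    have Gq: "G q = s x" using GQ s_facts[OF True] by (simp add: q_def)
    have q0: "0 \<le> q" using Qmono[of "1 / (1 + \<alpha>)" "s x"] r1 s_facts[OF True] D0Q d0pos
      by (simp add: q_def)
    have qx: "q \<le> x" using Qle s_facts[OF True] by (simp add: q_def)
    have "G (x + (y - x)) - G x \<le> G (q + (y - x)) - G q"
      using M1[OF q0 qx, of "y - x"] xy by (simp add: G_def)
    then have "G y - G x \<le> G (q + (y - x)) - s x" using Gq by simp
    moreover have "s y - s x \<le> G y - G x"
    proof -
      have "s y - s x = (1 - \<alpha>) / 2 * (G y - G x)" by (simp add: s_def field_simps)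
      also have "\<dots> \<le> G y - G x" using Gmono[OF xy] alpha by (intro mult_left_le_one_le) auto
      finally show ?thesis .
    qed
    ultimately have "s y \<le> G (q + (y - x))" by linarith
    then have "Q (s y) \<le> q + (y - x)" using Qle s_facts[OF Ty] by simp
    then show ?thesis using True Ty by (simp add: lH q_def)
  qed
  have ucase1: "d2 \<le> uHPD g \<alpha> x" if x: "- D0 < x" "x \<le> D0" for x
  proof -
    have "G (- D0 - d2) * G (- D0 + (x + D0)) \<le> G (- D0) * G (- D0 - d2 + (x + D0))"
      unfolding G_def by (rule L[OF g_logconcave]) (use x d2nn in auto)
    then have "\<beta> * G x \<le> \<alpha> / (1 + \<alpha>) * G (x - d2)" using Ga Gmd0 by simp
    then have "\<alpha> * (\<alpha> / (1 + \<alpha>) * G x) \<le> \<alpha> / (1 + \<alpha>) * G (x - d2)"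
      by (simp add: \<beta>_def power2_eq_square)
    then have "\<alpha> / (1 + \<alpha>) * (\<alpha> * G x) \<le> \<alpha> / (1 + \<alpha>) * G (x - d2)"
      by (simp add: algebra_simps)
    then have le: "\<alpha> * G x \<le> G (x - d2)" using alpha
      by (subst (asm) mult_le_cancel_left_pos) auto
    have gx: "\<alpha> / (1 + \<alpha>) \<le> G x" using Gmono[of "- D0" x] x Gmd0 by simp
    have "0 < \<alpha> / (1 + \<alpha>)" using alpha by simp
    then have "0 < G x" using gx by linarith
    then have "0 < \<alpha> * G x" using alpha by simp
    moreover have "\<alpha> * G x \<le> \<alpha>" using G01[of x] alpha by (intro mult_left_le) auto
    then have "\<alpha> * G x < 1" using alpha by linarith
    ultimately have "Q (\<alpha> * G x) \<le> x - d2" using Qle le by simp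
    then show ?thesis using x by (simp add: uH)
  qed
  have uall: "d2 \<le> uHPD g \<alpha> x" if x: "- D0 < x" for x
  proof (cases "x \<le> D0")
    case True then show ?thesis using ucase1 x by simp
  next
    case False
    have "d2 \<le> uHPD g \<alpha> D0" using ucase1 d0pos by simp
    then have e: "d2 \<le> D0 - Q (\<alpha> / (1 + \<alpha>))" using Gd0 by (simp add: uH)
    have "- D0 \<le> Q (\<alpha> / (1 + \<alpha>))"
    proof (rule ccontr)
      assume c: "\<not> - D0 \<le> Q (\<alpha> / (1 + \<alpha>))"
      have r3: "0 < \<alpha> / (1 + \<alpha>)" "\<alpha> / (1 + \<alpha>) < 1" using alpha by auto
      have "G (Q (\<alpha> / (1 + \<alpha>))) = G (- D0)" using GQ[OF r3] Gmd0 by simp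
      then have "G (Q (\<alpha> / (1 + \<alpha>))) = 0" unfolding G_def
        using Z[of "Q (\<alpha> / (1 + \<alpha>))" "- D0"] c d0pos by simp
      then show False using GQ[OF r3] r3 by linarith
    qed
    moreover have "D0 \<le> Q (s x)" using Qmono[of "1 / (1 + \<alpha>)" "s x"] r1 s_facts[of x] False D0Q by simp
    ultimately show ?thesis using e False by (simp add: uH)
  qed
  define A where "A = {x. lHPD g \<alpha> x \<le> d2 \<and> d2 \<le> uHPD g \<alpha> x}"
  have Am: "A \<in> sets borel" for \<theta>
    unfolding A_def using l_meas[OF sd] u_meas[OF sd] by measurable
  have Athm: "{x. lHPD g \<alpha> x \<le> \<theta> \<and> \<theta> \<le> uHPD g \<alpha> x} \<in> sets borel" for \<theta>
    using l_meas[OF sd] u_meas[OF sd] by measurable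
  have cov_le1: "coverage g \<alpha> \<theta> \<le> 1" for \<theta>
    unfolding coverage_def by (subst shift[OF Athm]) (rule RD.prob_le_1)
  have part1: "coverage g \<alpha> d2 \<le> (SUP \<theta>\<in>{0..}. coverage g \<alpha> \<theta>)"
    by (rule cSUP_upper) (use d2nn cov_le1 in \<open>auto simp: bdd_above_def\<close>)
  define A' where "A' = {t. t + d2 \<in> A}"
  have covA: "coverage g \<alpha> d2 = measure M A'"
    unfolding coverage_def A'_def by (subst shift[OF Athm]) (simp add: A_def)
  have A'm: "A' \<in> sets borel"
  proof -
    have "(\<lambda>t. t + d2) -` A \<inter> space borel \<in> sets borel"
      by (rule measurable_sets[OF _ Am]) measurable
    then show ?thesis by (simp add: vimage_def A'_def)
  qed
  define Lv where "Lv = linv g \<alpha> d2"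
  define a where "a = - D0 - d2"
  define b where "b = Lv - d2"
  have sub: "{a<..<b} \<subseteq> A'"
  proof
    fix t assume t: "t \<in> {a<..<b}"
    define x where "x = t + d2"
    have xs: "x < Sup {x. d2 \<ge> lHPD g \<alpha> x}" using t unfolding x_def b_def Lv_def linv_def by simp
    have "lHPD g \<alpha> 0 = 0" using d0pos unfolding lH by simp
    then have "0 \<in> {x. d2 \<ge> lHPD g \<alpha> x}" using d2nn by simp
    then have ne: "{x. d2 \<ge> lHPD g \<alpha> x} \<noteq> {}" by blast
    obtain y where "y \<in> {x. d2 \<ge> lHPD g \<alpha> x}" "x < y" using less_cSupD[OF ne xs] by blast
    then have "lHPD g \<alpha> x \<le> d2" using lmono[of x y] by simp
    moreover have "d2 \<le> uHPD g \<alpha> x" using uall t by (simp add: x_def a_def)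
    ultimately show "t \<in> A'" by (simp add: A'_def A_def x_def)
  qed
  have "G b = measure M {..b}" by (simp add: G_def cdfG_def M_def)
  also have "\<dots> \<le> measure M (({..a} \<union> {a<..<b}) \<union> {b})"
    by (rule RD.finite_measure_mono) auto
  also have "\<dots> \<le> measure M ({..a} \<union> {a<..<b}) + measure M {b}"
    by (rule measure_Un_le) auto
  also have "\<dots> \<le> measure M {..a} + measure M {a<..<b}"
    using measure_Un_le[where A="{..a}" and B="{a<..<b}" and M=M] atom0 by simp
  also have "measure M {..a} = \<beta>" using Ga by (simp add: a_def G_def cdfG_def M_def)
  also have "measure M {a<..<b} \<le> measure M A'"
    by (rule RD.finite_measure_mono[OF sub]) (simp add: A'm)
  finally have "G b - \<beta> \<le> coverage g \<alpha> d2" using covA by simp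
  moreover have "x1 g \<alpha> d2 = b" by (simp add: x1_def b_def Lv_def)
  ultimately show ?thesis using part1 by (simp add: G_def \<beta>_def)
qed

end
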